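(* Let $B_1,\dots,B_n$ be independent real-valued service times with finite means $\mu_i$, each with a distribution symmetric around its mean, and put $X_i=B_i-\mu_i$. Fix a sequence $\tau\in\mathsf S_n$ and use the mean-based schedule. Then for each $k\in\{1,\dots,n-1\}$, $W_{k+1}$ is stochastically dominated by $|S_k|$, where $S_k=X_{\tau(1)}+\cdots+X_{\tau(k)}$; consequently $\mathbb EW_{k+1}\le\mathbb E|X_{\tau(1)}+X_{\tau(2)}+\cdots+X_{\tau(k)}|$.
   Context: Under sequence $\tau$ ($\tau(i)$ the patient in slot $i$) and the mean-based schedule (interarrival time after patient $j$ equal to $\mu_j$), the waiting times are $W_1=0$, $W_{i+1}=(W_i+X_{\tau(i)})^+$ with $a^+=\max\{0,a\}$. *)

theory Defs
  imports "HOL-Probability.Probability" "HOL-Combinatorics.Permutations"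
begin

text \<open>Lindley recursion under the mean-based schedule.
  waiting_time X tau i is W_i for i >= 1:
  W_1 = 0, W_(i+1) = max 0 (W_i + X (tau i)).
  (The value at index 0 is an unused convention, equal to 0.)\<close>
fun waiting_time :: "(nat \<Rightarrow> real) \<Rightarrow> (nat \<Rightarrow> nat) \<Rightarrow> nat \<Rightarrow> real" where
  "waiting_time X tau 0 = 0"
| "waiting_time X tau (Suc 0) = 0"
| "waiting_time X tau (Suc (Suc i)) =
     max 0 (waiting_time X tau (Suc i) + X (tau (Suc i)))"

end

theory Submission
  imports Defs
begin

lemma wt_props:
  "(\<forall>j\<in>{1..Suc m}. (\<Sum>i=j..m. X (\<tau> i)) \<le> waiting_time X \<tau> (Suc m)) \<and>
   (\<exists>j\<in>{1..Suc m}. waiting_time X \<tau> (Suc m) = (\<Sum>i=j..m. X (\<tau> i)))"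
proof (induction m)
  case 0
  then show ?case by auto
next
  case (Suc m)
  then obtain j0 where j0: "j0\<in>{1..Suc m}" "waiting_time X \<tau> (Suc m) = (\<Sum>i=j0..m. X (\<tau> i))" by blast
  have A: "(\<Sum>i=j..Suc m. X (\<tau> i)) \<le> waiting_time X \<tau> (Suc (Suc m))" if "j\<in>{1..Suc (Suc m)}" for j
  proof (cases "j = Suc (Suc m)")
    case True then show ?thesis by simp
  next
    case False
    then have "j \<in> {1..Suc m}" using that by auto
    then have "(\<Sum>i=j..Suc m. X (\<tau> i)) = (\<Sum>i=j..m. X (\<tau> i)) + X (\<tau> (Suc m))"
      by (simp add: sum.atLeast_Suc_atMost_Suc_shift)
    also have "\<dots> \<le> waiting_time X \<tau> (Suc m) + X (\<tau> (Suc m))" using Suc.IH \<open>j \<in> {1..Suc m}\<close> by auto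
    finally show ?thesis by simp
  qed
  have B: "\<exists>j\<in>{1..Suc (Suc m)}. waiting_time X \<tau> (Suc (Suc m)) = (\<Sum>i=j..Suc m. X (\<tau> i))"
  proof (cases "waiting_time X \<tau> (Suc m) + X (\<tau> (Suc m)) \<le> 0")
    case True
    then show ?thesis by (intro bexI[of _ "Suc (Suc m)"]) auto
  next
    case False
    then have "waiting_time X \<tau> (Suc (Suc m)) = (\<Sum>i=j0..Suc m. X (\<tau> i))"
      using j0 by simp
    then show ?thesis using j0(1) by (intro bexI[of _ j0]) auto
  qed
  show ?case using A B by blast
qed

lemma wt_meas:
  "(\<And>i. 0 < i \<Longrightarrow> i < m \<Longrightarrow> (\<lambda>\<omega>. X \<omega> (\<tau> i)) \<in> borel_measurable M) \<Longrightarrow>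
   (\<lambda>\<omega>. waiting_time (X \<omega>) \<tau> m) \<in> borel_measurable M"
proof (induction m rule: nat_less_induct)
  case (1 m)
  consider "m = 0" | "m = Suc 0" | i where "m = Suc (Suc i)"
    by (metis not0_implies_Suc)
  then show ?case
  proof cases
    case 1 then show ?thesis by simp
  next
    case 2 then show ?thesis by simp
  next
    case (3 i)
    have "(\<lambda>\<omega>. waiting_time (X \<omega>) \<tau> (Suc i)) \<in> borel_measurable M"
      using 1 3 by auto
    moreover have "(\<lambda>\<omega>. X \<omega> (\<tau> (Suc i))) \<in> borel_measurable M" using 1 3 by auto
    ultimately show ?thesis using 3 by simp
  qed
qed

lemma tail_mono_nn:
  fixes f g :: "'a \<Rightarrow> real"
  assumes "sigma_finite_measure M"
    and fm: "f \<in> borel_measurable M" and gm: "g \<in> borel_measurable M"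
    and tl: "\<And>t. 0 \<le> t \<Longrightarrow> emeasure M {x\<in>space M. t < f x} \<le> emeasure M {x\<in>space M. t < g x}"
    and f0: "\<And>x. x \<in> space M \<Longrightarrow> 0 \<le> f x" and g0: "\<And>x. x \<in> space M \<Longrightarrow> 0 \<le> g x"
  shows "(\<integral>\<^sup>+x. ennreal (f x) \<partial>M) \<le> (\<integral>\<^sup>+x. ennreal (g x) \<partial>M)"
proof -
  interpret sigma_finite_measure M by fact
  interpret pair_sigma_finite M lborel
    by (intro pair_sigma_finite.intro) (simp_all add: assms lborel.sigma_finite_measure_axioms)
  have rep: "(\<integral>\<^sup>+x. ennreal (h x) \<partial>M) = (\<integral>\<^sup>+t. (\<integral>\<^sup>+x. indicator {0..<h x} t \<partial>M) \<partial>lborel)"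
    if hm: "h \<in> borel_measurable M" and h0: "\<And>x. x \<in> space M \<Longrightarrow> 0 \<le> h x" for h :: "'a \<Rightarrow> real"
  proof -
    have "(\<integral>\<^sup>+x. ennreal (h x) \<partial>M) = (\<integral>\<^sup>+x. (\<integral>\<^sup>+t. indicator {0..<h x} t \<partial>lborel) \<partial>M)"
      by (intro nn_integral_cong) (simp add: h0)
    also have "\<dots> = (\<integral>\<^sup>+t. (\<integral>\<^sup>+x. indicator {0..<h x} t \<partial>M) \<partial>lborel)"
    proof (rule Fubini'[symmetric])
      have "case_prod (\<lambda>x t. indicator {0..<h x} t :: ennreal) =
            (\<lambda>p. if 0 \<le> snd p \<and> snd p < h (fst p) then 1 else 0)"
        by (auto simp: fun_eq_iff indicator_def)
      moreover have "(\<lambda>p. if 0 \<le> snd p \<and> snd p < h (fst p) then 1 else (0::ennreal)) \<in> borel_measurable (M \<Otimes>\<^sub>M lborel)"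
        using hm by measurable
      ultimately show "case_prod (\<lambda>x t. indicator {0..<h x} t :: ennreal) \<in> borel_measurable (M \<Otimes>\<^sub>M lborel)"
        by simp
    qed
    finally show ?thesis .
  qed
  have inner: "(\<integral>\<^sup>+x. indicator {0..<h x} t \<partial>M) = (if 0 \<le> t then emeasure M {x\<in>space M. t < h x} else 0)"
    if hm: "h \<in> borel_measurable M" for h :: "'a \<Rightarrow> real" and t
  proof (cases "0 \<le> t")
    case True
    have "(\<integral>\<^sup>+x. indicator {0..<h x} t \<partial>M) = (\<integral>\<^sup>+x. indicator {x\<in>space M. t < h x} x \<partial>M)"
      by (intro nn_integral_cong) (auto simp: indicator_def True)
    also have "\<dots> = emeasure M {x\<in>space M. t < h x}"
      by (intro nn_integral_indicator) (use hm in measurable)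
    finally show ?thesis using True by simp
  next
    case False
    then show ?thesis by (simp add: indicator_def)
  qed
  have rf: "(\<integral>\<^sup>+x. ennreal (f x) \<partial>M) = (\<integral>\<^sup>+t. (\<integral>\<^sup>+x. indicator {0..<f x} t \<partial>M) \<partial>lborel)"
    using rep[of f] fm f0 by blast
  have rg: "(\<integral>\<^sup>+x. ennreal (g x) \<partial>M) = (\<integral>\<^sup>+t. (\<integral>\<^sup>+x. indicator {0..<g x} t \<partial>M) \<partial>lborel)"
    using rep[of g] gm g0 by blast
  show ?thesis
    unfolding rf rg
    by (rule nn_integral_mono) (simp add: inner fm gm tl)
qed

theorem lemma3p2:
  fixes M :: "'a measure" and B :: "nat \<Rightarrow> 'a \<Rightarrow> real" and \<mu> :: "nat \<Rightarrow> real"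
    and n :: nat and \<tau> :: "nat \<Rightarrow> nat" and k :: nat
  assumes "prob_space M"
    and rv: "\<And>i. i \<in> {1..n} \<Longrightarrow> B i \<in> borel_measurable M"
    and indep: "prob_space.indep_vars M (\<lambda>_. borel) B {1..n}"
    and integ: "\<And>i. i \<in> {1..n} \<Longrightarrow> integrable M (B i)"
    and mean: "\<And>i. i \<in> {1..n} \<Longrightarrow> \<mu> i = prob_space.expectation M (B i)"
    and symm: "\<And>i. i \<in> {1..n} \<Longrightarrow>
        distr M borel (\<lambda>\<omega>. B i \<omega> - \<mu> i) = distr M borel (\<lambda>\<omega>. - (B i \<omega> - \<mu> i))"
    and perm: "\<tau> permutes {1..n}"
    and k: "1 \<le> k" "k \<le> n - 1"
  shows "(\<forall>t::real. prob_space.prob M {\<omega> \<in> space M.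
              waiting_time (\<lambda>j. B j \<omega> - \<mu> j) \<tau> (k + 1) > t}
           \<le> prob_space.prob M {\<omega> \<in> space M.
              \<bar>\<Sum>i = 1..k. B (\<tau> i) \<omega> - \<mu> (\<tau> i)\<bar> > t})
       \<and> prob_space.expectation M (\<lambda>\<omega>. waiting_time (\<lambda>j. B j \<omega> - \<mu> j) \<tau> (k + 1))
         \<le> prob_space.expectation M (\<lambda>\<omega>. \<bar>\<Sum>i = 1..k. B (\<tau> i) \<omega> - \<mu> (\<tau> i)\<bar>)"
proof -
  interpret prob_space M by fact
  define I where "I = {1..k}"
  define J where "J = \<tau> ` I"
  have kn: "k < n" using k by auto
  have tauI: "\<tau> i \<in> {1..n}" if "i \<in> I" for i
    using that kn permutes_in_image[OF perm, of i] unfolding I_def by auto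
  have JS: "J \<subseteq> {1..n}" using tauI J_def by auto
  have injI: "inj_on \<tau> I" using permutes_inj[OF perm] by (simp add: inj_on_def inj_def)
  have Jne: "J \<noteq> {}" using k by (auto simp: J_def I_def)
  define Z where "Z l \<omega> = B l \<omega> - \<mu> l" for l \<omega>
  define P where "P = (\<Pi>\<^sub>M l\<in>J. (borel :: real measure))"
  define V where "V \<omega> = (\<lambda>l\<in>J. Z l \<omega>)" for \<omega>
  define sg where "sg j l = (if l \<in> \<tau> ` {1..<j} then -1 else (1::real))" for j l
  define R where "R j y = (\<lambda>l\<in>J. sg j l * y l)" for j and y :: "nat \<Rightarrow> real"
  define suf where "suf j y = (\<Sum>i=j..k. y (\<tau> i))" for j and y :: "nat \<Rightarrow> real"
  define W where "W \<omega> = waiting_time (\<lambda>j. B j \<omega> - \<mu> j) \<tau> (k+1)" for \<omega>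
  define S where "S \<omega> = (\<Sum>i=1..k. B (\<tau> i) \<omega> - \<mu> (\<tau> i))" for \<omega>
  have Zm: "Z l \<in> borel_measurable M" if "l \<in> J" for l
    using rv[of l] that JS unfolding Z_def by auto
  have Zcm: "(\<lambda>\<omega>. c * Z l \<omega>) \<in> borel_measurable M" if "l \<in> J" for l and c :: real
    using Zm[OF that] by simp
  have Vm: "V \<in> M \<rightarrow>\<^sub>M P"
    unfolding V_def P_def by (intro measurable_restrict Zm)
  have RVm: "(\<lambda>\<omega>. R j (V \<omega>)) \<in> M \<rightarrow>\<^sub>M P" for j
  proof -
    have "(\<lambda>\<omega>. R j (V \<omega>)) = (\<lambda>\<omega>. \<lambda>l\<in>J. sg j l * Z l \<omega>)"
      by (auto simp: fun_eq_iff R_def V_def)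
    moreover have "(\<lambda>\<omega>. \<lambda>l\<in>J. sg j l * Z l \<omega>) \<in> M \<rightarrow>\<^sub>M P"
      unfolding P_def using Zcm by (intro measurable_restrict) auto
    ultimately show ?thesis by simp
  qed
  have compm: "(\<lambda>y. y l) \<in> borel_measurable P" for l
  proof (cases "l \<in> J")
    case True then show ?thesis unfolding P_def by (rule measurable_component_singleton)
  next
    case False
    have "(\<lambda>y. y l) \<in> borel_measurable P \<longleftrightarrow> (\<lambda>y. undefined) \<in> borel_measurable P"
      using measurable_cong[of P "\<lambda>y. y l" "\<lambda>y. undefined" borel] False
      by (auto simp: P_def space_PiM PiE_def extensional_def)
    then show ?thesis by simp
  qed
  have sufm[measurable]: "suf j \<in> borel_measurable P" for j
    unfolding suf_def by (intro borel_measurable_sum compm)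
  have indc: "indep_vars (\<lambda>_. borel) (\<lambda>l \<omega>. c l * Z l \<omega>) J" for c :: "nat \<Rightarrow> real"
  proof -
    have "indep_vars (\<lambda>_. borel) B J" by (rule indep_vars_subset[OF indep JS])
    then have "indep_vars (\<lambda>_. borel) (\<lambda>l \<omega>. (\<lambda>b. c l * (b - \<mu> l)) (B l \<omega>)) J"
      by (rule indep_vars_compose2) auto
    then show ?thesis by (simp add: Z_def)
  qed
  have distc: "distr M P (\<lambda>\<omega>. \<lambda>l\<in>J. c l * Z l \<omega>) = (\<Pi>\<^sub>M l\<in>J. distr M borel (\<lambda>\<omega>. c l * Z l \<omega>))"
    for c :: "nat \<Rightarrow> real"
    unfolding P_def
    by (rule indep_vars_iff_distr_eq_PiM'[THEN iffD1, OF Jne _ indc]) (use Zcm in auto)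
  have marg: "distr M borel (\<lambda>\<omega>. sg j l * Z l \<omega>) = distr M borel (\<lambda>\<omega>. 1 * Z l \<omega>)" if "l \<in> J" for j l
  proof (cases "l \<in> \<tau> ` {1..<j}")
    case True
    then have "distr M borel (\<lambda>\<omega>. sg j l * Z l \<omega>) = distr M borel (\<lambda>\<omega>. - (B l \<omega> - \<mu> l))"
      by (simp add: sg_def Z_def)
    also have "\<dots> = distr M borel (\<lambda>\<omega>. B l \<omega> - \<mu> l)" using symm[of l] that JS by auto
    finally show ?thesis by (simp add: Z_def)
  next
    case False then show ?thesis by (simp add: sg_def)
  qed
  have key: "prob ((\<lambda>\<omega>. R j (V \<omega>)) -` A \<inter> space M) = prob (V -` A \<inter> space M)" if "A \<in> sets P" for j A
  proof -
    have e1: "(\<lambda>\<omega>. R j (V \<omega>)) = (\<lambda>\<omega>. \<lambda>l\<in>J. sg j l * Z l \<omega>)"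
      by (auto simp: fun_eq_iff R_def V_def)
    have e2: "V = (\<lambda>\<omega>. \<lambda>l\<in>J. (\<lambda>_. 1) l * Z l \<omega>)"
      by (auto simp: fun_eq_iff V_def)
    have "distr M P (\<lambda>\<omega>. R j (V \<omega>)) = distr M P V"
      unfolding e1 distc
      apply (subst e2) unfolding distc
      by (intro PiM_cong) (auto simp: marg)
    then have "measure (distr M P (\<lambda>\<omega>. R j (V \<omega>))) A = measure (distr M P V) A" by simp
    then show ?thesis using that by (simp add: measure_distr RVm Vm)
  qed
  have sufV: "suf j (V \<omega>) = (\<Sum>i=j..k. Z (\<tau> i) \<omega>)" if "1 \<le> j" for j \<omega>
    unfolding suf_def V_def using that by (intro sum.cong) (auto simp: J_def I_def)
  have SV: "S \<omega> = suf 1 (V \<omega>)" for \<omega> by (simp add: sufV S_def Z_def)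
  have sgI: "sg j (\<tau> i) = (if i < j then -1 else 1)" if "i \<in> I" "j \<le> k+1" for i j
  proof -
    have "\<tau> i \<in> \<tau> ` {1..<j} \<longleftrightarrow> i \<in> {1..<j}"
    proof
      assume "\<tau> i \<in> \<tau> ` {1..<j}"
      then obtain x where x: "x \<in> {1..<j}" "\<tau> i = \<tau> x" by auto
      then have "x \<in> I" using that by (auto simp: I_def)
      then show "i \<in> {1..<j}" using x injI \<open>i \<in> I\<close> by (metis inj_onD)
    qed auto
    then show ?thesis using that by (auto simp: sg_def I_def)
  qed
  have sufR_hi: "suf j' (R j (V \<omega>)) = suf j' (V \<omega>)" if "1 \<le> j" "j \<le> j'" "j \<le> k+1" for j j' \<omega>
    unfolding suf_def
  proof (intro sum.cong refl)
    fix i assume "i \<in> {j'..k}"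
    then have "i \<in> I" "\<not> i < j" using that by (auto simp: I_def)
    then show "R j (V \<omega>) (\<tau> i) = V \<omega> (\<tau> i)"
      using sgI[of i j] that by (auto simp: R_def J_def)
  qed
  have sufR_1: "suf 1 (R j (V \<omega>)) = 2 * suf j (V \<omega>) - suf 1 (V \<omega>)" if "1 \<le> j" "j \<le> k+1" for j \<omega>
  proof -
    have split: "{1..k} = {1..<j} \<union> {j..k}" using that by auto
    have a: "R j (V \<omega>) (\<tau> i) = - V \<omega> (\<tau> i)" if "i \<in> {1..<j}" for i
    proof -
      have "i \<in> I" "i < j" using that \<open>j \<le> k+1\<close> by (auto simp: I_def)
      then show ?thesis using sgI[of i j] \<open>j \<le> k+1\<close> by (auto simp: R_def J_def)
    qed
    have b: "R j (V \<omega>) (\<tau> i) = V \<omega> (\<tau> i)" if "i \<in> {j..k}" for i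
    proof -
      have "i \<in> I" "\<not> i < j" using that \<open>1 \<le> j\<close> by (auto simp: I_def)
      then show ?thesis using sgI[of i j] \<open>j \<le> k+1\<close> by (auto simp: R_def J_def)
    qed
    have "suf 1 (R j (V \<omega>)) = (\<Sum>i\<in>{1..<j}. R j (V \<omega>) (\<tau> i)) + (\<Sum>i\<in>{j..k}. R j (V \<omega>) (\<tau> i))"
      unfolding suf_def split by (subst sum.union_disjoint) auto
    also have "\<dots> = (\<Sum>i\<in>{1..<j}. - V \<omega> (\<tau> i)) + (\<Sum>i\<in>{j..k}. V \<omega> (\<tau> i))"
      using a b by simp
    finally have 1: "suf 1 (R j (V \<omega>)) = (\<Sum>i\<in>{1..<j}. - V \<omega> (\<tau> i)) + (\<Sum>i\<in>{j..k}. V \<omega> (\<tau> i))" .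
    have 2: "suf 1 (V \<omega>) = (\<Sum>i\<in>{1..<j}. V \<omega> (\<tau> i)) + (\<Sum>i\<in>{j..k}. V \<omega> (\<tau> i))"
      unfolding suf_def split by (subst sum.union_disjoint) auto
    show ?thesis using 1 2 by (simp add: suf_def sum_negf)
  qed
  have neg1: "suf 1 (R (k+1) (V \<omega>)) = - suf 1 (V \<omega>)" for \<omega>
  proof -
    have "suf (k+1) y = 0" for y by (simp add: suf_def)
    then show ?thesis using sufR_1[of "k+1" \<omega>] by simp
  qed
  have Sm: "S \<in> borel_measurable M"
  proof -
    have "S = (\<lambda>\<omega>. suf 1 (V \<omega>))" using SV by auto
    then show ?thesis using measurable_comp[OF Vm sufm] by (simp add: comp_def)
  qed
  have Wm: "W \<in> borel_measurable M"
    unfolding W_def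
  proof (rule wt_meas)
    fix i :: nat assume "0 < i" "i < k + 1"
    then have "\<tau> i \<in> {1..n}" using tauI by (auto simp: I_def)
    then show "(\<lambda>\<omega>. B (\<tau> i) \<omega> - \<mu> (\<tau> i)) \<in> borel_measurable M" using rv by auto
  qed
  have Wge: "suf j (V \<omega>) \<le> W \<omega>" if "j \<in> {1..k+1}" for j \<omega>
    using wt_props[of k "\<lambda>j. B j \<omega> - \<mu> j" \<tau>] that sufV[of j \<omega>] by (auto simp: W_def Z_def)
  have Weq: "\<exists>j\<in>{1..k+1}. W \<omega> = suf j (V \<omega>)" for \<omega>
    using wt_props[of k "\<lambda>j. B j \<omega> - \<mu> j" \<tau>] sufV by (auto simp: W_def Z_def)
  have Wnn: "0 \<le> W \<omega>" for \<omega>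
    using Wge[of "k+1" \<omega>] by (simp add: suf_def)
  have tail: "prob {\<omega>\<in>space M. t < W \<omega>} \<le> prob {\<omega>\<in>space M. t < \<bar>S \<omega>\<bar>}" for t
  proof (cases "t < 0")
    case True
    then have "{\<omega>\<in>space M. t < \<bar>S \<omega>\<bar>} = space M" by auto
    then show ?thesis by (simp add: prob_space)
  next
    case False
    then have t0: "0 \<le> t" by simp
    define E where "E j = {y \<in> space P. t < suf j y \<and> (\<forall>j'\<in>{j<..k}. suf j' y \<le> t) \<and> suf 1 y \<le> t}" for j
    define F where "F j = {y \<in> space P. t < suf j y \<and> (\<forall>j'\<in>{j<..k}. suf j' y \<le> t) \<and> t < suf 1 y}" for j
    have Es: "E j \<in> sets P" for j unfolding E_def by measurable
    have Fs: "F j \<in> sets P" for j unfolding F_def by measurable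
    have Ev: "V -` E j \<inter> space M \<in> events" for j using measurable_sets[OF Vm Es] .
    have Fv: "V -` F j \<inter> space M \<in> events" for j using measurable_sets[OF Vm Fs] .
    have Sev: "{\<omega>\<in>space M. t < S \<omega>} \<in> events" using Sm by measurable
    have Sev2: "{\<omega>\<in>space M. S \<omega> < -t} \<in> events" using Sm by measurable
    have incl: "{\<omega>\<in>space M. t < W \<omega>} \<subseteq> {\<omega>\<in>space M. t < S \<omega>} \<union> (\<Union>j\<in>I. V -` E j \<inter> space M)"
    proof
      fix \<omega> assume "\<omega> \<in> {\<omega>\<in>space M. t < W \<omega>}"
      then have om: "\<omega> \<in> space M" and tw: "t < W \<omega>" by auto
      show "\<omega> \<in> {\<omega>\<in>space M. t < S \<omega>} \<union> (\<Union>j\<in>I. V -` E j \<inter> space M)"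
      proof (cases "t < S \<omega>")
        case True then show ?thesis using om by auto
      next
        case False
        obtain j where j: "j \<in> {1..k+1}" "W \<omega> = suf j (V \<omega>)" using Weq by blast
        have "j \<noteq> k+1" using j tw t0 by (auto simp: suf_def)
        define D where "D = {j\<in>I. t < suf j (V \<omega>)}"
        have "j \<in> D" using j tw \<open>j \<noteq> k+1\<close> by (auto simp: D_def I_def)
        have finD: "finite D" by (simp add: D_def I_def)
        define j0 where "j0 = Max D"
        have j0D: "j0 \<in> D" using finD \<open>j \<in> D\<close> j0_def Max_in by auto
        have j0max: "\<forall>j'\<in>{j0<..k}. suf j' (V \<omega>) \<le> t"
        proof
          fix j' assume j': "j' \<in> {j0<..k}"
          then have "j' \<notin> D" using Max_ge[OF finD] j0_def by fastforce
          then show "suf j' (V \<omega>) \<le> t" using j' j0D by (auto simp: D_def I_def)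
        qed
        have "V \<omega> \<in> space P" using measurable_space[OF Vm om] .
        then have "V \<omega> \<in> E j0" using j0D j0max False by (auto simp: E_def D_def SV)
        then show ?thesis using om j0D by (auto simp: D_def)
      qed
    qed
    have EF: "V -` E j \<inter> space M \<subseteq> (\<lambda>\<omega>. R j (V \<omega>)) -` F j \<inter> space M" if "j \<in> I" for j
    proof
      fix \<omega> assume a: "\<omega> \<in> V -` E j \<inter> space M"
      have "R j (V \<omega>) \<in> space P" using measurable_space[OF RVm] a by auto
      moreover have "suf j' (R j (V \<omega>)) = suf j' (V \<omega>)" if "j \<le> j'" for j'
        using sufR_hi \<open>j\<in>I\<close> that by (auto simp: I_def)
      moreover have "suf 1 (R j (V \<omega>)) = 2 * suf j (V \<omega>) - suf 1 (V \<omega>)"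
        using sufR_1 \<open>j\<in>I\<close> by (auto simp: I_def)
      ultimately show "\<omega> \<in> (\<lambda>\<omega>. R j (V \<omega>)) -` F j \<inter> space M" using a by (auto simp: E_def F_def)
    qed
    have p1: "prob {\<omega>\<in>space M. t < W \<omega>} \<le> prob ({\<omega>\<in>space M. t < S \<omega>} \<union> (\<Union>j\<in>I. V -` E j \<inter> space M))"
      by (rule finite_measure_mono[OF incl], intro sets.Un sets.finite_UN Sev Ev) (auto simp: I_def)
    have p2: "prob ({\<omega>\<in>space M. t < S \<omega>} \<union> (\<Union>j\<in>I. V -` E j \<inter> space M))
        \<le> prob {\<omega>\<in>space M. t < S \<omega>} + prob (\<Union>j\<in>I. V -` E j \<inter> space M)"
      by (rule measure_Un_le, rule Sev, intro sets.finite_UN Ev) (auto simp: I_def)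
    have p3: "prob (\<Union>j\<in>I. V -` E j \<inter> space M) \<le> (\<Sum>j\<in>I. prob (V -` E j \<inter> space M))"
      by (rule finite_measure_subadditive_finite) (use Ev in \<open>auto simp: I_def\<close>)
    have p4: "(\<Sum>j\<in>I. prob (V -` E j \<inter> space M)) \<le> (\<Sum>j\<in>I. prob (V -` F j \<inter> space M))"
    proof (rule sum_mono)
      fix j assume "j \<in> I"
      have "prob (V -` E j \<inter> space M) \<le> prob ((\<lambda>\<omega>. R j (V \<omega>)) -` F j \<inter> space M)"
        by (rule finite_measure_mono[OF EF[OF \<open>j \<in> I\<close>]]) (rule measurable_sets[OF RVm Fs])
      then show "prob (V -` E j \<inter> space M) \<le> prob (V -` F j \<inter> space M)"
        using key[OF Fs] by simp
    qed
    have disj: "disjoint_family_on (\<lambda>j. V -` F j \<inter> space M) I"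
      unfolding disjoint_family_on_def
    proof (intro ballI impI)
      fix a b assume ab: "a \<in> I" "b \<in> I" "a \<noteq> b"
      show "(V -` F a \<inter> space M) \<inter> (V -` F b \<inter> space M) = {}"
      proof -
        have dis: "y \<notin> F a' \<or> y \<notin> F b'" if "a' < b'" "b' \<in> I" for a' b' y
        proof -
          have "b' \<in> {a'<..k}" using that by (auto simp: I_def)
          then show ?thesis unfolding F_def by force
        qed
        have "a < b \<or> b < a" using ab by auto
        then show ?thesis using dis[of a b] dis[of b a] ab by blast
      qed
    qed
    have p5: "(\<Sum>j\<in>I. prob (V -` F j \<inter> space M)) = prob (\<Union>j\<in>I. V -` F j \<inter> space M)"
      by (rule finite_measure_finite_Union[symmetric]) (use Fv disj in \<open>auto simp: I_def\<close>)
    have p6: "prob (\<Union>j\<in>I. V -` F j \<inter> space M) \<le> prob {\<omega>\<in>space M. t < S \<omega>}"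
      by (rule finite_measure_mono) (use Sev in \<open>auto simp: F_def SV\<close>)
    have negS: "prob {\<omega>\<in>space M. t < S \<omega>} = prob {\<omega>\<in>space M. S \<omega> < -t}"
    proof -
      define G where "G = {y\<in>space P. t < suf 1 y}"
      have G: "G \<in> sets P" unfolding G_def by measurable
      have 1: "{\<omega>\<in>space M. t < S \<omega>} = V -` G \<inter> space M"
        using measurable_space[OF Vm] by (auto simp: G_def SV)
      have 2: "{\<omega>\<in>space M. S \<omega> < -t} = (\<lambda>\<omega>. R (k+1) (V \<omega>)) -` G \<inter> space M"
      proof -
        have n: "suf (Suc 0) (R (Suc k) (V \<omega>)) = - suf (Suc 0) (V \<omega>)" for \<omega> using neg1[of \<omega>] by simp
        show ?thesis using measurable_space[OF RVm] by (auto simp: G_def SV n)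
      qed
      show ?thesis using key[OF G, of "k+1"] 1 2 by simp
    qed
    have absS: "prob {\<omega>\<in>space M. t < \<bar>S \<omega>\<bar>} = prob {\<omega>\<in>space M. t < S \<omega>} + prob {\<omega>\<in>space M. S \<omega> < -t}"
    proof -
      have "{\<omega>\<in>space M. t < \<bar>S \<omega>\<bar>} = {\<omega>\<in>space M. t < S \<omega>} \<union> {\<omega>\<in>space M. S \<omega> < -t}"
        by auto
      moreover have "{\<omega>\<in>space M. t < S \<omega>} \<inter> {\<omega>\<in>space M. S \<omega> < -t} = {}" using t0 by auto
      ultimately show ?thesis using finite_measure_Union[OF Sev Sev2] by simp
    qed
    show ?thesis using p1 p2 p3 p4 p5 p6 negS absS by linarith
  qed
  have Sint: "integrable M (\<lambda>\<omega>. \<bar>S \<omega>\<bar>)"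
  proof -
    have "integrable M S" unfolding S_def
    proof (rule Bochner_Integration.integrable_sum)
      fix i assume "i \<in> {1..k}"
      then have "\<tau> i \<in> {1..n}" using tauI by (auto simp: I_def)
      then show "integrable M (\<lambda>x. B (\<tau> i) x - \<mu> (\<tau> i))"
        using integ by (intro Bochner_Integration.integrable_diff) auto
    qed
    then show ?thesis by (rule integrable_abs)
  qed
  have nnle: "(\<integral>\<^sup>+\<omega>. ennreal (W \<omega>) \<partial>M) \<le> (\<integral>\<^sup>+\<omega>. ennreal \<bar>S \<omega>\<bar> \<partial>M)"
  proof (rule tail_mono_nn)
    show "sigma_finite_measure M" by (rule prob_space_imp_sigma_finite) fact
    fix t :: real
    show "emeasure M {x \<in> space M. t < W x} \<le> emeasure M {x \<in> space M. t < \<bar>S x\<bar>}"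
      using tail[of t] by (simp add: emeasure_eq_measure)
  qed (use Wm Sm Wnn in auto)
  have "expectation W = enn2real (\<integral>\<^sup>+\<omega>. ennreal (W \<omega>) \<partial>M)"
    by (rule integral_eq_nn_integral) (use Wm Wnn in auto)
  also have "\<dots> \<le> enn2real (\<integral>\<^sup>+\<omega>. ennreal \<bar>S \<omega>\<bar> \<partial>M)"
    by (rule enn2real_mono[OF nnle]) (simp add: nn_integral_eq_integral[OF Sint])
  also have "\<dots> = expectation (\<lambda>\<omega>. \<bar>S \<omega>\<bar>)"
    by (rule integral_eq_nn_integral[symmetric]) (use Sm in auto)
  finally have ex: "expectation W \<le> expectation (\<lambda>\<omega>. \<bar>S \<omega>\<bar>)" .
  show ?thesis using tail ex unfolding W_def S_def by simp
qed

end
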